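(* Let $\Lambda$ be a countable index set, $\overline{a},\overline{r}$ sequences of positive reals indexed by $\Lambda$, $x^+\in\ell^1_{\overline{r}}$ and $t\in(0,1)$. The following are equivalent: (i) $x^+\in k_t$; (ii) there is $K>0$ such that $\|x^+-x\|_{\overline{r},1}+\|x^+\|_{\overline{r},1}-\|x\|_{\overline{r},1}\le K\|x^+-x\|_{\overline{a},2}^{\frac{2-2t}{2-t}}$ for all $x\in\ell^1_{\overline{r}}$; (iii) there is $K>0$ such that $\|x^+\|_{\overline{r},1}-\|x\|_{\overline{r},1}\le K\|x^+-x\|_{\overline{a},2}^{\frac{2-2t}{2-t}}$ for all $x\in\mathbb{R}^\Lambda$ with $|x_j|\le|x^+_j|$ for all $j\in\Lambda$. More precisely, (i) implies (ii) with $K=\left(2+4(2^{1-t}-1)^{-1}\right)\|x^+\|_{k_t}^{\frac{t}{2-t}}$, and if (iii) holds with constant $K$ then $\|x^+\|_{k_t}\le K^{\frac{2-t}{t}}$.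
   Context: For a sequence $\omega$ of positive reals and $p\in(0,\infty)$, $\|x\|_{\omega,p}=\left(\sum_{j\in\Lambda}\omega_j^p|x_j|^p\right)^{1/p}$ (possibly $+\infty$) and $\ell^p_\omega=\{x\in\mathbb{R}^\Lambda:\|x\|_{\omega,p}<\infty\}$. For $t\in(0,2)$, $k_t=\{x\in\mathbb{R}^\Lambda:\|x\|_{k_t}<\infty\}$ with $\|x\|_{k_t}=\sup_{\alpha>0}\alpha\left(\sum_{j\in\Lambda}\overline{a}_j^{-2}\overline{r}_j^2\mathbf{1}_{\{\overline{a}_j^{-2}\overline{r}_j\alpha<|x_j|\}}\right)^{1/t}$. *)

theory Defs
  imports "HOL-Analysis.Analysis"
begin

text \<open>The countable index set Lambda is modelled by a type of class countable;
  elements of R^Lambda are functions of type 'i => real.\<close>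

definition wnorm :: "('i \<Rightarrow> real) \<Rightarrow> real \<Rightarrow> ('i \<Rightarrow> real) \<Rightarrow> ereal" where
  "wnorm \<omega> p x =
     (if (\<lambda>j. \<omega> j powr p * \<bar>x j\<bar> powr p) summable_on UNIV
      then ereal ((\<Sum>\<^sub>\<infinity>j. \<omega> j powr p * \<bar>x j\<bar> powr p) powr (1 / p))
      else \<infinity>)"

definition lspace :: "('i \<Rightarrow> real) \<Rightarrow> real \<Rightarrow> ('i \<Rightarrow> real) set" where
  "lspace \<omega> p = {x. wnorm \<omega> p x < \<infinity>}"

definition ksum :: "('i \<Rightarrow> real) \<Rightarrow> ('i \<Rightarrow> real) \<Rightarrow> ('i \<Rightarrow> real) \<Rightarrow> real \<Rightarrow> ereal" where
  "ksum a r x \<alpha> =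
     (let f = (\<lambda>j. if (a j)\<^sup>2 powr -1 * r j * \<alpha> < \<bar>x j\<bar> then (a j)\<^sup>2 powr -1 * (r j)\<^sup>2 else 0)
      in if f summable_on UNIV then ereal (\<Sum>\<^sub>\<infinity>j. f j) else \<infinity>)"

definition kterm :: "('i \<Rightarrow> real) \<Rightarrow> ('i \<Rightarrow> real) \<Rightarrow> real \<Rightarrow> ('i \<Rightarrow> real) \<Rightarrow> real \<Rightarrow> ereal" where
  "kterm a r t x \<alpha> =
     (if ksum a r x \<alpha> = \<infinity> then \<infinity> else ereal (\<alpha> * real_of_ereal (ksum a r x \<alpha>) powr (1 / t)))"

definition knorm :: "('i \<Rightarrow> real) \<Rightarrow> ('i \<Rightarrow> real) \<Rightarrow> real \<Rightarrow> ('i \<Rightarrow> real) \<Rightarrow> ereal" where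
  "knorm a r t x = (SUP \<alpha>\<in>{0<..}. kterm a r t x \<alpha>)"

definition kspace :: "('i \<Rightarrow> real) \<Rightarrow> ('i \<Rightarrow> real) \<Rightarrow> real \<Rightarrow> ('i \<Rightarrow> real) set" where
  "kspace a r t = {x. knorm a r t x < \<infinity>}"

text \<open>Condition (ii) with constant K. Since x, x^+ are in l^1_r, the 1-norms are finite;
  if the weighted 2-norm on the right is infinite the inequality holds trivially.\<close>
definition cond_ii :: "('i \<Rightarrow> real) \<Rightarrow> ('i \<Rightarrow> real) \<Rightarrow> real \<Rightarrow> ('i \<Rightarrow> real) \<Rightarrow> real \<Rightarrow> bool" where
  "cond_ii a r t xp K \<longleftrightarrow>
     (\<forall>x \<in> lspace r 1. wnorm a 2 (\<lambda>j. xp j - x j) < \<infinity> \<longrightarrow>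
        real_of_ereal (wnorm r 1 (\<lambda>j. xp j - x j)) + real_of_ereal (wnorm r 1 xp)
          - real_of_ereal (wnorm r 1 x)
        \<le> K * real_of_ereal (wnorm a 2 (\<lambda>j. xp j - x j)) powr ((2 - 2 * t) / (2 - t)))"

text \<open>Condition (iii) with constant K (the 1-norm of such x is finite since |x_j| <= |x^+_j|).\<close>
definition cond_iii :: "('i \<Rightarrow> real) \<Rightarrow> ('i \<Rightarrow> real) \<Rightarrow> real \<Rightarrow> ('i \<Rightarrow> real) \<Rightarrow> real \<Rightarrow> bool" where
  "cond_iii a r t xp K \<longleftrightarrow>
     (\<forall>x :: 'i \<Rightarrow> real. (\<forall>j. \<bar>x j\<bar> \<le> \<bar>xp j\<bar>) \<longrightarrow> wnorm a 2 (\<lambda>j. xp j - x j) < \<infinity> \<longrightarrow>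
        real_of_ereal (wnorm r 1 xp) - real_of_ereal (wnorm r 1 x)
        \<le> K * real_of_ereal (wnorm a 2 (\<lambda>j. xp j - x j)) powr ((2 - 2 * t) / (2 - t)))"

end

theory Submission
  imports Defs
begin

lemma wnorm1:
  assumes "\<And>j. r j > 0"
  shows "wnorm r 1 y = (if (\<lambda>j. r j * \<bar>y j\<bar>) summable_on UNIV
           then ereal (\<Sum>\<^sub>\<infinity>j. r j * \<bar>y j\<bar>) else \<infinity>)"
proof -
  have e: "(\<lambda>j. r j powr 1 * \<bar>y j\<bar> powr 1) = (\<lambda>j. r j * \<bar>y j\<bar>)"
    using assms by (auto intro!: ext simp: less_imp_le)
  have "(\<Sum>\<^sub>\<infinity>j. r j * \<bar>y j\<bar>) \<ge> 0"
    using assms by (intro infsum_nonneg) (simp add: less_imp_le)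
  then show ?thesis unfolding wnorm_def e by simp
qed

lemma wnorm2:
  assumes "\<And>j. a j > 0"
  shows "wnorm a 2 y = (if (\<lambda>j. (a j * y j)\<^sup>2) summable_on UNIV
           then ereal (sqrt (\<Sum>\<^sub>\<infinity>j. (a j * y j)\<^sup>2)) else \<infinity>)"
proof -
  have e: "(\<lambda>j. a j powr 2 * \<bar>y j\<bar> powr 2) = (\<lambda>j. (a j * y j)\<^sup>2)"
  proof
    fix j
    have "a j powr 2 = (a j)\<^sup>2" using assms[of j] by (simp add: powr_numeral)
    moreover have "\<bar>y j\<bar> powr 2 = (y j)\<^sup>2"
      by (cases "y j = 0") (auto simp: powr_numeral)
    ultimately show "a j powr 2 * \<bar>y j\<bar> powr 2 = (a j * y j)\<^sup>2"
      by (simp add: power_mult_distrib)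
  qed
  have "(\<Sum>\<^sub>\<infinity>j. (a j * y j)\<^sup>2) \<ge> 0"
    by (intro infsum_nonneg) simp
  then show ?thesis unfolding wnorm_def e by (simp add: powr_half_sqrt)
qed

definition kf :: "('i \<Rightarrow> real) \<Rightarrow> ('i \<Rightarrow> real) \<Rightarrow> ('i \<Rightarrow> real) \<Rightarrow> real \<Rightarrow> 'i \<Rightarrow> real" where
  "kf a r x \<alpha> j = (if (a j)\<^sup>2 powr -1 * r j * \<alpha> < \<bar>x j\<bar> then (a j)\<^sup>2 powr -1 * (r j)\<^sup>2 else 0)"

lemma kf_nonneg: "kf a r x \<alpha> j \<ge> 0"
  unfolding kf_def by simp

lemma ksum_eq: "ksum a r x \<alpha> = (if kf a r x \<alpha> summable_on UNIV then ereal (\<Sum>\<^sub>\<infinity>j. kf a r x \<alpha> j) else \<infinity>)"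
  unfolding ksum_def kf_def[abs_def] Let_def by simp

lemma knorm_nonneg:
  assumes "0 < t"
  shows "knorm a r t x \<ge> 0"
proof -
  have "kterm a r t x 1 \<ge> 0"
    unfolding kterm_def by simp
  also have "kterm a r t x 1 \<le> knorm a r t x"
    unfolding knorm_def by (rule SUP_upper) simp
  finally show ?thesis .
qed

lemma knorm_bound:
  assumes fin: "knorm a r t x < \<infinity>" and t: "0 < t" and al: "\<alpha> > 0"
  shows "kf a r x \<alpha> summable_on UNIV"
    and "(\<Sum>\<^sub>\<infinity>j. kf a r x \<alpha> j) \<le> (real_of_ereal (knorm a r t x) / \<alpha>) powr t"
proof -
  define M where "M = real_of_ereal (knorm a r t x)"
  have kM: "knorm a r t x = ereal M"
    using fin knorm_nonneg[OF t, of a r x] unfolding M_def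
    by (cases "knorm a r t x") auto
  have le: "kterm a r t x \<alpha> \<le> knorm a r t x"
    unfolding knorm_def by (rule SUP_upper) (simp add: al)
  show sm: "kf a r x \<alpha> summable_on UNIV"
  proof (rule ccontr)
    assume "\<not> ?thesis"
    then have "kterm a r t x \<alpha> = \<infinity>" unfolding kterm_def ksum_eq by simp
    with le fin show False by simp
  qed
  define N where "N = (\<Sum>\<^sub>\<infinity>j. kf a r x \<alpha> j)"
  have N0: "N \<ge> 0" unfolding N_def by (intro infsum_nonneg kf_nonneg)
  have "kterm a r t x \<alpha> = ereal (\<alpha> * N powr (1 / t))"
    unfolding kterm_def ksum_eq N_def using sm by simp
  with le kM have "\<alpha> * N powr (1 / t) \<le> M" by simp
  then have "N powr (1 / t) \<le> M / \<alpha>" using al by (simp add: field_simps)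
  then have "(N powr (1 / t)) powr t \<le> (M / \<alpha>) powr t"
    by (intro powr_mono2) (use t in auto)
  also have "(N powr (1 / t)) powr t = N"
    using N0 t by (simp add: powr_powr)
  finally show "(\<Sum>\<^sub>\<infinity>j. kf a r x \<alpha> j) \<le> (real_of_ereal (knorm a r t x) / \<alpha>) powr t"
    unfolding N_def M_def .
qed

lemma lspace1:
  assumes "\<And>j. r j > 0"
  shows "y \<in> lspace r 1 \<longleftrightarrow> (\<lambda>j. r j * \<bar>y j\<bar>) summable_on UNIV"
  unfolding lspace_def using wnorm1[OF assms, where y=y] by auto

lemma norm1_val:
  assumes "\<And>j. r j > 0" "y \<in> lspace r 1"
  shows "real_of_ereal (wnorm r 1 y) = (\<Sum>\<^sub>\<infinity>j. r j * \<bar>y j\<bar>)"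
  using wnorm1[OF assms(1), where y=y] lspace1[OF assms(1), where y=y] assms(2) by auto

lemma norm2_val:
  assumes "\<And>j. a j > 0" "wnorm a 2 y < \<infinity>"
  shows "(\<lambda>j. (a j * y j)\<^sup>2) summable_on UNIV"
    and "real_of_ereal (wnorm a 2 y) = sqrt (\<Sum>\<^sub>\<infinity>j. (a j * y j)\<^sup>2)"
  using wnorm2[OF assms(1), where y=y] assms(2) by (auto split: if_splits)

lemma ln_step:
  fixes t u v k :: real
  assumes "0 < t" "t < 1"
    and "u + v \<le> k + ((2 - 2 * t) / (2 - t)) * (u + v / 2)"
  shows "v \<le> (2 - t) * k - t * u"
proof -
  have "(2 - t) * (u + v) \<le> (2 - t) * (k + ((2 - 2 * t) / (2 - t)) * (u + v / 2))"
    using assms by (intro mult_left_mono) auto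
  also have "\<dots> = (2 - t) * k + (2 - 2 * t) * (u + v / 2)"
    using assms by (simp add: field_simps)
  finally show ?thesis by (simp add: algebra_simps)
qed

lemma iii_bound:
  fixes a r xp :: "'i \<Rightarrow> real"
  assumes a: "\<And>j. a j > 0" and r: "\<And>j. r j > 0"
    and xp: "xp \<in> lspace r 1" and t0: "0 < t" and t1: "t < 1"
    and K: "K > 0" and c: "cond_iii a r t xp K"
  shows "knorm a r t xp \<le> ereal (K powr ((2 - t) / t))"
  unfolding knorm_def
proof (rule SUP_least)
  fix \<alpha> :: real assume "\<alpha> \<in> {0<..}"
  then have al: "\<alpha> > 0" by simp
  define w where "w j = (a j)\<^sup>2 powr -1 * r j" for j
  have w_pos: "w j > 0" for j using a[of j] r[of j] unfolding w_def by simp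
  have kfw: "kf a r xp \<alpha> j = (if w j * \<alpha> < \<bar>xp j\<bar> then r j * w j else 0)" for j
    unfolding kf_def w_def by (simp add: power2_eq_square)
  have fin: "sum (kf a r xp \<alpha>) F \<le> K powr (2 - t) * \<alpha> powr (- t)" if F: "finite F" for F
  proof -
    define G where "G = {j\<in>F. w j * \<alpha> < \<bar>xp j\<bar>}"
    have G: "finite G" using F unfolding G_def by simp
    define S where "S = sum (kf a r xp \<alpha>) F"
    have SG: "S = (\<Sum>j\<in>G. r j * w j)"
      unfolding S_def G_def kfw using F by (simp add: sum.inter_filter[symmetric])
    define x where "x j = (if j \<in> G then xp j - sgn (xp j) * w j * \<alpha> else xp j)" for j
    have hx: "xp j - x j = (if j \<in> G then sgn (xp j) * w j * \<alpha> else 0)" for j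
      unfolding x_def by simp
    have absx: "\<bar>x j\<bar> = (if j \<in> G then \<bar>xp j\<bar> - w j * \<alpha> else \<bar>xp j\<bar>)" for j
    proof (cases "j \<in> G")
      case True
      then have "w j * \<alpha> < \<bar>xp j\<bar>" unfolding G_def by simp
      moreover have "w j * \<alpha> > 0" using w_pos[of j] al by simp
      ultimately show ?thesis unfolding x_def using True
        by (cases "xp j > 0") (auto simp: sgn_if)
    qed (simp add: x_def)
    have xle: "\<bar>x j\<bar> \<le> \<bar>xp j\<bar>" for j
      using absx[of j] w_pos[of j] al by (auto simp: mult_pos_pos less_imp_le)
    have sq: "(a j * (xp j - x j))\<^sup>2 = (if j \<in> G then \<alpha>\<^sup>2 * (r j * w j) else 0)" for j
    proof (cases "j \<in> G")
      case True
      then have "xp j \<noteq> 0" using w_pos[of j] al unfolding G_def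
        by (auto simp: mult_pos_pos) (smt (verit, best) mult_pos_pos)
      then have "(sgn (xp j))\<^sup>2 = 1" by (simp add: sgn_if)
      moreover have "w j = r j / (a j)\<^sup>2" using a[of j] unfolding w_def
        by (simp add: powr_neg_one)
      ultimately show ?thesis using True a[of j] unfolding hx
        by (simp add: power_mult_distrib power2_eq_square field_simps)
    qed (simp add: hx)
    have sm2: "(\<lambda>j. (a j * (xp j - x j))\<^sup>2) summable_on UNIV"
      by (subst summable_on_cong_neutral[where T=G and g="\<lambda>j. \<alpha>\<^sup>2 * (r j * w j)"])
         (auto simp: sq G)
    have s2: "(\<Sum>\<^sub>\<infinity>j. (a j * (xp j - x j))\<^sup>2) = \<alpha>\<^sup>2 * S"
    proof -
      have "(\<Sum>\<^sub>\<infinity>j. (a j * (xp j - x j))\<^sup>2) = (\<Sum>\<^sub>\<infinity>j\<in>G. \<alpha>\<^sup>2 * (r j * w j))"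
        by (rule infsum_cong_neutral) (auto simp: sq)
      also have "\<dots> = \<alpha>\<^sup>2 * S" using G by (simp add: SG sum_distrib_left)
      finally show ?thesis .
    qed
    have S0: "S \<ge> 0" unfolding S_def by (intro sum_nonneg kf_nonneg)
    have wfin: "wnorm a 2 (\<lambda>j. xp j - x j) < \<infinity>"
      using wnorm2[where a=a, OF a, where y="\<lambda>j. xp j - x j"] sm2 by simp
    have D: "real_of_ereal (wnorm a 2 (\<lambda>j. xp j - x j)) = \<alpha> * sqrt S"
      using wnorm2[where a=a, OF a, where y="\<lambda>j. xp j - x j"] sm2 s2 al S0
      by (simp add: real_sqrt_mult)
    have smxp: "(\<lambda>j. r j * \<bar>xp j\<bar>) summable_on UNIV" using xp lspace1[where r=r, OF r] by simp
    have dif: "(\<lambda>j. r j * \<bar>xp j\<bar> - r j * \<bar>x j\<bar>) = (\<lambda>j. if j \<in> G then \<alpha> * (r j * w j) else 0)"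
      by (auto simp: absx algebra_simps)
    have smd: "(\<lambda>j. r j * \<bar>xp j\<bar> - r j * \<bar>x j\<bar>) summable_on UNIV"
      unfolding dif
      by (subst summable_on_cong_neutral[where T=G and g="\<lambda>j. \<alpha> * (r j * w j)"]) (auto simp: G)
    have sd: "(\<Sum>\<^sub>\<infinity>j. r j * \<bar>xp j\<bar> - r j * \<bar>x j\<bar>) = \<alpha> * S"
    proof -
      have "(\<Sum>\<^sub>\<infinity>j. r j * \<bar>xp j\<bar> - r j * \<bar>x j\<bar>) = (\<Sum>\<^sub>\<infinity>j\<in>G. \<alpha> * (r j * w j))"
        unfolding dif by (rule infsum_cong_neutral) auto
      also have "\<dots> = \<alpha> * S" using G by (simp add: SG sum_distrib_left)
      finally show ?thesis .
    qed
    have smx: "(\<lambda>j. r j * \<bar>x j\<bar>) summable_on UNIV"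
    proof -
      have "(\<lambda>j. (r j * \<bar>xp j\<bar> - r j * \<bar>x j\<bar>) + (- (r j * \<bar>xp j\<bar>))) summable_on UNIV"
        using smd smxp summable_on_uminus[where f="\<lambda>j. r j * \<bar>xp j\<bar>" and A=UNIV]
        by (intro summable_on_add) auto
      then have "(\<lambda>j. - (r j * \<bar>x j\<bar>)) summable_on UNIV" by simp
      then show ?thesis using summable_on_uminus by blast
    qed
    have xl: "x \<in> lspace r 1" using smx lspace1[where r=r, OF r] by simp
    have ndiff: "real_of_ereal (wnorm r 1 xp) - real_of_ereal (wnorm r 1 x) = \<alpha> * S"
    proof -
      have "(\<Sum>\<^sub>\<infinity>j. r j * \<bar>xp j\<bar>) = (\<Sum>\<^sub>\<infinity>j. (r j * \<bar>xp j\<bar> - r j * \<bar>x j\<bar>) + r j * \<bar>x j\<bar>)"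
        by simp
      also have "\<dots> = \<alpha> * S + (\<Sum>\<^sub>\<infinity>j. r j * \<bar>x j\<bar>)"
        using infsum_add[OF smd smx] sd by simp
      finally show ?thesis using norm1_val[where r=r, OF r xp] norm1_val[where r=r, OF r xl] by simp
    qed
    have ineq: "\<alpha> * S \<le> K * (\<alpha> * sqrt S) powr ((2 - 2 * t) / (2 - t))"
      using c xle wfin unfolding cond_iii_def ndiff[symmetric] D[symmetric] by blast
    show ?thesis
    proof (cases "S = 0")
      case True then show ?thesis using K al unfolding S_def by simp
    next
      case False
      then have Sp: "S > 0" using S0 by simp
      have "ln (\<alpha> * S) \<le> ln (K * (\<alpha> * sqrt S) powr ((2 - 2 * t) / (2 - t)))"
        using ineq al Sp K by (subst ln_le_cancel_iff) auto
      then have "ln \<alpha> + ln S \<le> ln K + ((2 - 2 * t) / (2 - t)) * (ln \<alpha> + ln S / 2)"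
        using al Sp K by (simp add: ln_mult ln_powr ln_sqrt)
      from ln_step[OF t0 t1 this] have "ln S \<le> (2 - t) * ln K - t * ln \<alpha>" .
      then have "exp (ln S) \<le> exp ((2 - t) * ln K - t * ln \<alpha>)" by simp
      also have "\<dots> = K powr (2 - t) * \<alpha> powr (- t)"
        using K al by (simp add: powr_def exp_diff exp_add divide_inverse exp_minus algebra_simps)
      finally show ?thesis using Sp unfolding S_def by simp
    qed
  qed
  have smk: "kf a r xp \<alpha> summable_on UNIV"
    by (rule nonneg_bdd_above_summable_on) (auto intro!: kf_nonneg bdd_aboveI2 fin)
  define N where "N = (\<Sum>\<^sub>\<infinity>j. kf a r xp \<alpha> j)"
  have NB: "N \<le> K powr (2 - t) * \<alpha> powr (- t)"
    unfolding N_def by (rule infsum_le_finite_sums[OF smk]) (use fin in auto)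
  have N0: "N \<ge> 0" unfolding N_def by (intro infsum_nonneg kf_nonneg)
  have "N powr (1 / t) \<le> (K powr (2 - t) * \<alpha> powr (- t)) powr (1 / t)"
    using NB N0 t0 by (intro powr_mono2) auto
  also have "\<dots> = K powr ((2 - t) / t) * \<alpha> powr (- 1)"
    using K al t0 by (simp add: powr_mult powr_powr)
  finally have "\<alpha> * N powr (1 / t) \<le> \<alpha> * (K powr ((2 - t) / t) * \<alpha> powr (- 1))"
    using al by (intro mult_left_mono) auto
  also have "\<dots> = K powr ((2 - t) / t)" using al by (simp add: powr_neg_one)
  finally show "kterm a r t xp \<alpha> \<le> ereal (K powr ((2 - t) / t))"
    unfolding kterm_def ksum_eq N_def using smk by simp
qed

lemma part1:
  fixes a r xp h :: "'i \<Rightarrow> real"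
  assumes a: "\<And>j. a j > 0" and r: "\<And>j. r j > 0" and al: "\<alpha> > 0" and M0: "M \<ge> 0"
    and smk: "kf a r xp \<alpha> summable_on UNIV"
    and kb: "(\<Sum>\<^sub>\<infinity>j. kf a r xp \<alpha> j) \<le> (M / \<alpha>) powr t"
    and smh: "(\<lambda>j. (a j * h j)\<^sup>2) summable_on UNIV"
    and F: "finite F"
  shows "(\<Sum>j\<in>{j\<in>F. (a j)\<^sup>2 powr -1 * r j * \<alpha> < \<bar>xp j\<bar>}. r j * \<bar>h j\<bar>)
           \<le> (M / \<alpha>) powr (t / 2) * sqrt (\<Sum>\<^sub>\<infinity>j. (a j * h j)\<^sup>2)"
proof -
  define G where "G = {j\<in>F. (a j)\<^sup>2 powr -1 * r j * \<alpha> < \<bar>xp j\<bar>}"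
  have G: "finite G" "G \<subseteq> UNIV" using F unfolding G_def by auto
  have e1: "r j * \<bar>h j\<bar> = (r j / a j) * \<bar>a j * h j\<bar>" for j
    using a[of j] by (simp add: abs_mult)
  have cs: "(\<Sum>j\<in>G. r j * \<bar>h j\<bar>)\<^sup>2 \<le> (\<Sum>j\<in>G. (r j / a j)\<^sup>2) * (\<Sum>j\<in>G. \<bar>a j * h j\<bar>\<^sup>2)"
    unfolding e1 by (rule Cauchy_Schwarz_ineq_sum)
  have "(\<Sum>j\<in>G. (r j / a j)\<^sup>2) = (\<Sum>j\<in>G. kf a r xp \<alpha> j)"
    using a by (intro sum.cong) (auto simp: G_def kf_def powr_neg_one power_divide)
  also have "\<dots> \<le> (\<Sum>\<^sub>\<infinity>j. kf a r xp \<alpha> j)"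
    by (rule finite_sum_le_infsum[OF smk G]) (simp add: kf_nonneg)
  also have "\<dots> \<le> (M / \<alpha>) powr t" by (rule kb)
  finally have A: "(\<Sum>j\<in>G. (r j / a j)\<^sup>2) \<le> (M / \<alpha>) powr t" .
  have B: "(\<Sum>j\<in>G. \<bar>a j * h j\<bar>\<^sup>2) \<le> (\<Sum>\<^sub>\<infinity>j. (a j * h j)\<^sup>2)"
    using finite_sum_le_infsum[OF smh G] by simp
  have "(\<Sum>j\<in>G. r j * \<bar>h j\<bar>)\<^sup>2 \<le> (M / \<alpha>) powr t * (\<Sum>\<^sub>\<infinity>j. (a j * h j)\<^sup>2)"
    using cs mult_mono[OF A B] by (force intro: sum_nonneg)
  also have "\<dots> = ((M / \<alpha>) powr (t / 2) * sqrt (\<Sum>\<^sub>\<infinity>j. (a j * h j)\<^sup>2))\<^sup>2"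
  proof -
    have "((M / \<alpha>) powr (t / 2))\<^sup>2 = (M / \<alpha>) powr t"
      by (simp add: power2_eq_square powr_add[symmetric])
    moreover have "(sqrt (\<Sum>\<^sub>\<infinity>j. (a j * h j)\<^sup>2))\<^sup>2 = (\<Sum>\<^sub>\<infinity>j. (a j * h j)\<^sup>2)"
      by (simp add: infsum_nonneg)
    ultimately show ?thesis by (simp add: power_mult_distrib)
  qed
  finally show ?thesis unfolding G_def[symmetric]
    by (rule power2_le_imp_le) (simp add: infsum_nonneg)
qed

lemma dyadic:
  fixes q :: real
  assumes "q \<ge> 1"
  obtains k :: nat where "2 ^ k \<le> q" "q < 2 ^ (k + 1)"
proof -
  define L where "L = log 2 q"
  have L0: "L \<ge> 0" unfolding L_def using assms by simp
  define k where "k = nat \<lfloor>L\<rfloor>"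
  have kk: "real k = of_int \<lfloor>L\<rfloor>" unfolding k_def using L0 by simp
  have q: "2 powr L = q" unfolding L_def using assms by simp
  have "2 ^ k = 2 powr (real k)" by (simp add: powr_realpow)
  also have "\<dots> \<le> 2 powr L" using kk by (intro powr_mono) auto
  finally have 1: "2 ^ k \<le> q" using q by simp
  have "q < 2 powr (real k + 1)" unfolding q[symmetric] using kk
    using real_of_int_floor_add_one_gt[of L] by (intro powr_less_mono) auto
  also have "\<dots> = 2 ^ (k + 1)" by (simp add: powr_realpow[symmetric] powr_add)
  finally show ?thesis using 1 that by blast
qed

lemma term_id:
  fixes M \<alpha> t :: real and k :: nat
  assumes "M \<ge> 0" "\<alpha> > 0"
  shows "(\<alpha> / 2 ^ k) * (M / (\<alpha> / 2 ^ (k + 1))) powr t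
         = 2 powr t * M powr t * \<alpha> powr (1 - t) * (2 powr (t - 1)) ^ k"
proof (cases "M = 0")
  case True then show ?thesis by simp
next
  case False
  then have M: "M > 0" using assms by simp
  have "ln ((\<alpha> / 2 ^ k) * (M / (\<alpha> / 2 ^ (k + 1))) powr t)
        = ln (2 powr t * M powr t * \<alpha> powr (1 - t) * (2 powr (t - 1)) ^ k)"
    using M assms by (simp add: ln_mult ln_div ln_powr ln_realpow algebra_simps)
  then show ?thesis using M assms by (subst (asm) ln_inj_iff) auto
qed

lemma geom_bound:
  fixes p :: real assumes "0 \<le> p" "p < 1"
  shows "(\<Sum>k<n. p ^ k) \<le> 1 / (1 - p)"
proof -
  have "(\<Sum>k<n. p ^ k) = (1 - p ^ n) / (1 - p)"
    using assms by (subst sum_gp_strict) auto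
  also have "\<dots> \<le> 1 / (1 - p)" using assms by (intro divide_right_mono) auto
  finally show ?thesis .
qed

lemma part2:
  fixes a r xp :: "'i \<Rightarrow> real"
  assumes a: "\<And>j. a j > 0" and r: "\<And>j. r j > 0" and al: "\<alpha> > 0" and M0: "M \<ge> 0"
    and t0: "0 < t" and t1: "t < 1"
    and SM: "\<And>\<beta>. \<beta> > 0 \<Longrightarrow> kf a r xp \<beta> summable_on UNIV"
    and HK: "\<And>\<beta>. \<beta> > 0 \<Longrightarrow> (\<Sum>\<^sub>\<infinity>j. kf a r xp \<beta> j) \<le> (M / \<beta>) powr t"
    and F: "finite F"
  shows "(\<Sum>j\<in>{j\<in>F. \<not> (a j)\<^sup>2 powr -1 * r j * \<alpha> < \<bar>xp j\<bar>}. r j * \<bar>xp j\<bar>)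
           \<le> 2 powr t / (1 - 2 powr (t - 1)) * M powr t * \<alpha> powr (1 - t)"
proof -
  define w where "w j = (a j)\<^sup>2 powr -1 * r j" for j
  have w_pos: "w j > 0" for j using a[of j] r[of j] unfolding w_def by simp
  define G where "G = {j\<in>F. \<not> w j * \<alpha> < \<bar>xp j\<bar> \<and> xp j \<noteq> 0}"
  have G: "finite G" using F unfolding G_def by simp
  have s1: "(\<Sum>j\<in>{j\<in>F. \<not> (a j)\<^sup>2 powr -1 * r j * \<alpha> < \<bar>xp j\<bar>}. r j * \<bar>xp j\<bar>)
            = (\<Sum>j\<in>G. r j * \<bar>xp j\<bar>)"
    unfolding G_def w_def using F by (intro sum.mono_neutral_right) auto
  define kk where "kk j = (SOME k::nat. 2 ^ k \<le> w j * \<alpha> / \<bar>xp j\<bar> \<and> w j * \<alpha> / \<bar>xp j\<bar> < 2 ^ (k + 1))" for j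
  have kk: "2 ^ kk j \<le> w j * \<alpha> / \<bar>xp j\<bar> \<and> w j * \<alpha> / \<bar>xp j\<bar> < 2 ^ (kk j + 1)" if "j \<in> G" for j
  proof -
    have "w j * \<alpha> / \<bar>xp j\<bar> \<ge> 1" using that unfolding G_def by auto
    then obtain k :: nat where "2 ^ k \<le> w j * \<alpha> / \<bar>xp j\<bar>" "w j * \<alpha> / \<bar>xp j\<bar> < 2 ^ (k + 1)"
      by (rule dyadic)
    then show ?thesis unfolding kk_def by (intro someI_ex[where P="\<lambda>k::nat. 2 ^ k \<le> w j * \<alpha> / \<bar>xp j\<bar> \<and> w j * \<alpha> / \<bar>xp j\<bar> < 2 ^ (k + 1)"]) blast
  qed
  define Kn where "Kn = Suc (Max (kk ` G))"
  have kKn: "kk j < Kn" if "j \<in> G" for j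
    unfolding Kn_def using G that by (simp add: le_imp_less_Suc)
  define g where "g j k = (\<alpha> / 2 ^ k) * kf a r xp (\<alpha> / 2 ^ (k + 1)) j" for j and k :: nat
  have g0: "g j k \<ge> 0" for j k unfolding g_def using al by (simp add: kf_nonneg)
  have pt: "r j * \<bar>xp j\<bar> \<le> g j (kk j)" if "j \<in> G" for j
  proof -
    have xp0: "\<bar>xp j\<bar> > 0" using that unfolding G_def by auto
    from kk[OF that] have k1: "2 ^ kk j * \<bar>xp j\<bar> \<le> w j * \<alpha>" and k2: "w j * \<alpha> < 2 ^ (kk j + 1) * \<bar>xp j\<bar>"
      using xp0 by (auto simp: field_simps)
    have "w j * \<alpha> / 2 ^ (kk j + 1) < \<bar>xp j\<bar>"
      using k2 by (subst pos_divide_less_eq) (auto simp: mult.commute)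
    then have c: "(a j)\<^sup>2 powr -1 * r j * (\<alpha> / 2 ^ (kk j + 1)) < \<bar>xp j\<bar>"
      unfolding w_def by simp
    have "g j (kk j) = (\<alpha> / 2 ^ kk j) * (r j * w j)"
      unfolding g_def kf_def w_def using c by (simp add: power2_eq_square)
    also have "\<dots> = r j * (w j * \<alpha> / 2 ^ kk j)" by simp
    also have "\<dots> \<ge> r j * \<bar>xp j\<bar>"
      using k1 r[of j] by (intro mult_left_mono) (auto simp: field_simps)
    finally show ?thesis .
  qed
  have "(\<Sum>j\<in>G. r j * \<bar>xp j\<bar>) \<le> (\<Sum>j\<in>G. \<Sum>k<Kn. g j k)"
  proof (rule sum_mono)
    fix j assume j: "j \<in> G"
    have "g j (kk j) \<le> (\<Sum>k<Kn. g j k)"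
      using kKn[OF j] g0 by (intro member_le_sum) auto
    with pt[OF j] show "r j * \<bar>xp j\<bar> \<le> (\<Sum>k<Kn. g j k)" by simp
  qed
  also have "\<dots> = (\<Sum>k<Kn. (\<alpha> / 2 ^ k) * (\<Sum>j\<in>G. kf a r xp (\<alpha> / 2 ^ (k + 1)) j))"
    unfolding g_def by (subst sum.swap) (simp add: sum_distrib_left)
  also have "\<dots> \<le> (\<Sum>k<Kn. (\<alpha> / 2 ^ k) * (M / (\<alpha> / 2 ^ (k + 1))) powr t)"
  proof (rule sum_mono)
    fix k :: nat
    have b: "\<alpha> / 2 ^ (k + 1) > 0" using al by simp
    have "(\<Sum>j\<in>G. kf a r xp (\<alpha> / 2 ^ (k + 1)) j) \<le> (\<Sum>\<^sub>\<infinity>j. kf a r xp (\<alpha> / 2 ^ (k + 1)) j)"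
      using G by (intro finite_sum_le_infsum SM b) (auto simp: kf_nonneg)
    also have "\<dots> \<le> (M / (\<alpha> / 2 ^ (k + 1))) powr t" by (rule HK[OF b])
    finally show "(\<alpha> / 2 ^ k) * (\<Sum>j\<in>G. kf a r xp (\<alpha> / 2 ^ (k + 1)) j)
                  \<le> (\<alpha> / 2 ^ k) * (M / (\<alpha> / 2 ^ (k + 1))) powr t"
      using al by (intro mult_left_mono) auto
  qed
  also have "\<dots> = 2 powr t * M powr t * \<alpha> powr (1 - t) * (\<Sum>k<Kn. (2 powr (t - 1)) ^ k)"
    unfolding sum_distrib_left using term_id[OF M0 al] by (intro sum.cong) auto
  also have "\<dots> \<le> 2 powr t * M powr t * \<alpha> powr (1 - t) * (1 / (1 - 2 powr (t - 1)))"
    using t1 by (intro mult_left_mono geom_bound) (auto simp: powr_less_one)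
  finally show ?thesis unfolding s1 by simp
qed

lemma fin_bound:
  fixes a r xp h :: "'i \<Rightarrow> real"
  assumes a: "\<And>j. a j > 0" and r: "\<And>j. r j > 0" and al: "\<alpha> > 0" and M0: "M \<ge> 0"
    and t0: "0 < t" and t1: "t < 1"
    and SM: "\<And>\<beta>. \<beta> > 0 \<Longrightarrow> kf a r xp \<beta> summable_on UNIV"
    and HK: "\<And>\<beta>. \<beta> > 0 \<Longrightarrow> (\<Sum>\<^sub>\<infinity>j. kf a r xp \<beta> j) \<le> (M / \<beta>) powr t"
    and smh: "(\<lambda>j. (a j * h j)\<^sup>2) summable_on UNIV"
    and F: "finite F"
  shows "(\<Sum>j\<in>F. r j * min \<bar>h j\<bar> \<bar>xp j\<bar>)
     \<le> (M / \<alpha>) powr (t / 2) * sqrt (\<Sum>\<^sub>\<infinity>j. (a j * h j)\<^sup>2)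
        + 2 powr t / (1 - 2 powr (t - 1)) * M powr t * \<alpha> powr (1 - t)"
proof -
  define P where "P j \<longleftrightarrow> (a j)\<^sup>2 powr -1 * r j * \<alpha> < \<bar>xp j\<bar>" for j
  have split: "(\<Sum>j\<in>F. r j * min \<bar>h j\<bar> \<bar>xp j\<bar>)
      = (\<Sum>j\<in>{j\<in>F. P j}. r j * min \<bar>h j\<bar> \<bar>xp j\<bar>) + (\<Sum>j\<in>{j\<in>F. \<not> P j}. r j * min \<bar>h j\<bar> \<bar>xp j\<bar>)"
    using F by (subst sum.union_disjoint[symmetric]) (auto intro!: sum.cong)
  have "(\<Sum>j\<in>{j\<in>F. P j}. r j * min \<bar>h j\<bar> \<bar>xp j\<bar>) \<le> (\<Sum>j\<in>{j\<in>F. P j}. r j * \<bar>h j\<bar>)"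
    using r by (intro sum_mono mult_left_mono) (auto simp: less_imp_le)
  also have "\<dots> \<le> (M / \<alpha>) powr (t / 2) * sqrt (\<Sum>\<^sub>\<infinity>j. (a j * h j)\<^sup>2)"
    unfolding P_def by (rule part1[OF a r al M0 SM[OF al] HK[OF al] smh F])
  finally have 1: "(\<Sum>j\<in>{j\<in>F. P j}. r j * min \<bar>h j\<bar> \<bar>xp j\<bar>) \<le> (M / \<alpha>) powr (t / 2) * sqrt (\<Sum>\<^sub>\<infinity>j. (a j * h j)\<^sup>2)" .
  have "(\<Sum>j\<in>{j\<in>F. \<not> P j}. r j * min \<bar>h j\<bar> \<bar>xp j\<bar>) \<le> (\<Sum>j\<in>{j\<in>F. \<not> P j}. r j * \<bar>xp j\<bar>)"
    using r by (intro sum_mono mult_left_mono) (auto simp: less_imp_le)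
  also have "\<dots> \<le> 2 powr t / (1 - 2 powr (t - 1)) * M powr t * \<alpha> powr (1 - t)"
    unfolding P_def by (rule part2[OF a r al M0 t0 t1 SM HK F])
  finally show ?thesis using 1 split by linarith
qed

lemma alg1: assumes "(s::real) \<noteq> 0" "t = 2 - s"
  shows "(t / 2) * (m - (2 / s) * (d - (t / 2) * m)) + d = (t / s) * m + ((2 - 2 * t) / s) * d"
proof -
  have "s * ((t / 2) * (m - (2 / s) * (d - (t / 2) * m)) + d) = s * ((t / s) * m + ((2 - 2 * t) / s) * d)"
    using assms(1) unfolding assms(2) by (simp add: field_simps)
  then show ?thesis using assms(1) by simp
qed

lemma alg2: assumes "(s::real) \<noteq> 0" "t = 2 - s"
  shows "t * m + (1 - t) * ((2 / s) * (d - (t / 2) * m)) = (t / s) * m + ((2 - 2 * t) / s) * d"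
proof -
  have "s * (t * m + (1 - t) * ((2 / s) * (d - (t / 2) * m))) = s * ((t / s) * m + ((2 - 2 * t) / s) * d)"
    using assms(1) unfolding assms(2) by (simp add: field_simps)
  then show ?thesis using assms(1) by simp
qed

lemma alpha_choice:
  fixes M D C t :: real
  assumes t0: "0 < t" and t1: "t < 1" and M: "M > 0" and D: "D > 0"
  shows "\<exists>\<alpha>>0. (M / \<alpha>) powr (t / 2) * D + C * M powr t * \<alpha> powr (1 - t)
     = (1 + C) * M powr (t / (2 - t)) * D powr ((2 - 2 * t) / (2 - t))"
proof -
  define \<alpha> where "\<alpha> = (D / M powr (t / 2)) powr (2 / (2 - t))"
  have al: "\<alpha> > 0" unfolding \<alpha>_def using M D by simp
  have la: "ln \<alpha> = (2 / (2 - t)) * (ln D - (t / 2) * ln M)"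
    unfolding \<alpha>_def using M D by (simp add: ln_powr ln_div)
  have t2: "2 - t \<noteq> 0" using t1 by simp
  have e1: "(M / \<alpha>) powr (t / 2) * D = M powr (t / (2 - t)) * D powr ((2 - 2 * t) / (2 - t))"
  proof -
    have q: "(t / 2) * (ln M - (2 / (2 - t)) * (ln D - (t / 2) * ln M)) + ln D
        = (t / (2 - t)) * ln M + ((2 - 2 * t) / (2 - t)) * ln D"
      using alg1[OF t2] by simp
    have "ln ((M / \<alpha>) powr (t / 2) * D) = (t / 2) * (ln M - ln \<alpha>) + ln D"
      using M D al by (simp add: ln_mult ln_div ln_powr)
    also have "\<dots> = (t / (2 - t)) * ln M + ((2 - 2 * t) / (2 - t)) * ln D"
      unfolding la by (rule q)
    also have "\<dots> = ln (M powr (t / (2 - t)) * D powr ((2 - 2 * t) / (2 - t)))"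
      using M D by (simp add: ln_mult ln_powr)
    finally have "ln ((M / \<alpha>) powr (t / 2) * D) = ln (M powr (t / (2 - t)) * D powr ((2 - 2 * t) / (2 - t)))" .
    then show ?thesis using M D al by (subst (asm) ln_inj_iff) auto
  qed
  have e2: "M powr t * \<alpha> powr (1 - t) = M powr (t / (2 - t)) * D powr ((2 - 2 * t) / (2 - t))"
  proof -
    have q: "t * ln M + (1 - t) * ((2 / (2 - t)) * (ln D - (t / 2) * ln M))
        = (t / (2 - t)) * ln M + ((2 - 2 * t) / (2 - t)) * ln D"
      using alg2[OF t2] by simp
    have "ln (M powr t * \<alpha> powr (1 - t)) = t * ln M + (1 - t) * ln \<alpha>"
      using M D al by (simp add: ln_mult ln_powr)
    also have "\<dots> = (t / (2 - t)) * ln M + ((2 - 2 * t) / (2 - t)) * ln D"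
      unfolding la by (rule q)
    also have "\<dots> = ln (M powr (t / (2 - t)) * D powr ((2 - 2 * t) / (2 - t)))"
      using M D by (simp add: ln_mult ln_powr)
    finally have "ln (M powr t * \<alpha> powr (1 - t)) = ln (M powr (t / (2 - t)) * D powr ((2 - 2 * t) / (2 - t)))" .
    then show ?thesis using M D al by (subst (asm) ln_inj_iff) auto
  qed
  show ?thesis
  proof (rule exI[of _ \<alpha>], intro conjI al)
    have "(M / \<alpha>) powr (t / 2) * D + C * M powr t * \<alpha> powr (1 - t)
        = (M / \<alpha>) powr (t / 2) * D + C * (M powr t * \<alpha> powr (1 - t))" by simp
    also have "\<dots> = (1 + C) * (M powr (t / (2 - t)) * D powr ((2 - 2 * t) / (2 - t)))"
      unfolding e1 e2 by (simp add: algebra_simps)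
    finally show "(M / \<alpha>) powr (t / 2) * D + C * M powr t * \<alpha> powr (1 - t)
     = (1 + C) * M powr (t / (2 - t)) * D powr ((2 - 2 * t) / (2 - t))" by simp
  qed
qed

lemma const_eq:
  fixes t :: real assumes t0: "0 < t" and t1: "t < 1"
  shows "2 + 4 / (2 powr (1 - t) - 1) = 2 * (1 + 2 powr t / (1 - 2 powr (t - 1)))"
    and "2 powr t / (1 - 2 powr (t - 1)) \<ge> 0"
proof -
  define p where "p = 2 powr (t - 1)"
  have p0: "0 < p" and p1: "p < 1" unfolding p_def using t1 by (auto simp: powr_less_one)
  have e1: "2 powr (1 - t) = 1 / p" unfolding p_def by (simp add: powr_minus_divide[symmetric])
  have e2: "2 powr t = 2 * p" unfolding p_def using powr_add[of 2 "t - 1" 1] by simp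
  show "2 + 4 / (2 powr (1 - t) - 1) = 2 * (1 + 2 powr t / (1 - 2 powr (t - 1)))"
    unfolding e1 e2 p_def[symmetric] using p0 p1 by (simp add: field_simps)
  show "2 powr t / (1 - 2 powr (t - 1)) \<ge> 0" using p1 unfolding p_def by simp
qed

lemma ii_from_i:
  fixes a r xp :: "'i \<Rightarrow> real"
  assumes a: "\<And>j. a j > 0" and r: "\<And>j. r j > 0"
    and xp: "xp \<in> lspace r 1" and t0: "0 < t" and t1: "t < 1"
    and ks: "xp \<in> kspace a r t"
  shows "cond_ii a r t xp ((2 + 4 / (2 powr (1 - t) - 1))
                              * real_of_ereal (knorm a r t xp) powr (t / (2 - t)))"
proof -
  define M where "M = real_of_ereal (knorm a r t xp)"
  have fin: "knorm a r t xp < \<infinity>" using ks unfolding kspace_def by simp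
  have M0: "M \<ge> 0" unfolding M_def using knorm_nonneg[OF t0, of a r xp] by (simp add: real_of_ereal_pos)
  have SM: "\<And>\<beta>. \<beta> > 0 \<Longrightarrow> kf a r xp \<beta> summable_on UNIV"
    using knorm_bound(1)[OF fin t0] by blast
  have HK: "\<And>\<beta>. \<beta> > 0 \<Longrightarrow> (\<Sum>\<^sub>\<infinity>j. kf a r xp \<beta> j) \<le> (M / \<beta>) powr t"
    using knorm_bound(2)[OF fin t0] unfolding M_def by blast
  define C where "C = 2 powr t / (1 - 2 powr (t - 1))"
  have C0: "C \<ge> 0" unfolding C_def using const_eq(2)[OF t0 t1] .
  have Ceq: "2 + 4 / (2 powr (1 - t) - 1) = 2 * (1 + C)" unfolding C_def using const_eq(1)[OF t0 t1] .
  define e where "e = (2 - 2 * t) / (2 - t)"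
  show ?thesis
    unfolding cond_ii_def M_def[symmetric] Ceq e_def[symmetric]
  proof (intro ballI impI)
    fix x assume xl: "x \<in> lspace r 1" and wf: "wnorm a 2 (\<lambda>j. xp j - x j) < \<infinity>"
    define h where "h j = xp j - x j" for j
    have smh: "(\<lambda>j. (a j * h j)\<^sup>2) summable_on UNIV"
      using norm2_val(1)[where a=a, OF a wf] unfolding h_def .
    define D where "D = sqrt (\<Sum>\<^sub>\<infinity>j. (a j * h j)\<^sup>2)"
    have Dv: "real_of_ereal (wnorm a 2 (\<lambda>j. xp j - x j)) = D"
      using norm2_val(2)[where a=a, OF a wf] unfolding h_def D_def .
    have D0: "D \<ge> 0" unfolding D_def by (simp add: infsum_nonneg)
    have smxp: "(\<lambda>j. r j * \<bar>xp j\<bar>) summable_on UNIV" using xp lspace1[where r=r, OF r] by simp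
    have smx: "(\<lambda>j. r j * \<bar>x j\<bar>) summable_on UNIV" using xl lspace1[where r=r, OF r] by simp
    have smhr: "(\<lambda>j. r j * \<bar>h j\<bar>) summable_on UNIV"
    proof (rule summable_on_comparison_test[OF summable_on_add[OF smxp smx]])
      fix j
      have "\<bar>h j\<bar> \<le> \<bar>xp j\<bar> + \<bar>x j\<bar>" unfolding h_def by simp
      then show "r j * \<bar>h j\<bar> \<le> r j * \<bar>xp j\<bar> + r j * \<bar>x j\<bar>"
        using r[of j] by (simp add: distrib_left[symmetric] less_imp_le)
      show "0 \<le> r j * \<bar>h j\<bar>" using r[of j] by simp
    qed
    have hl: "(\<lambda>j. xp j - x j) \<in> lspace r 1" using smhr lspace1[where r=r, OF r] unfolding h_def by simp
    define \<phi> where "\<phi> j = r j * \<bar>h j\<bar> + r j * \<bar>xp j\<bar> + (- (r j * \<bar>x j\<bar>))" for j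
    have sm1: "(\<lambda>j. r j * \<bar>h j\<bar> + r j * \<bar>xp j\<bar>) summable_on UNIV"
      by (rule summable_on_add[OF smhr smxp])
    have sm2: "(\<lambda>j. - (r j * \<bar>x j\<bar>)) summable_on UNIV"
      using smx summable_on_uminus[where f="\<lambda>j. r j * \<bar>x j\<bar>" and A=UNIV] by simp
    have smphi: "\<phi> summable_on UNIV" unfolding \<phi>_def by (rule summable_on_add[OF sm1 sm2])
    have LHS: "real_of_ereal (wnorm r 1 (\<lambda>j. xp j - x j)) + real_of_ereal (wnorm r 1 xp)
          - real_of_ereal (wnorm r 1 x) = (\<Sum>\<^sub>\<infinity>j. \<phi> j)"
    proof -
      have "(\<Sum>\<^sub>\<infinity>j. \<phi> j) = (\<Sum>\<^sub>\<infinity>j. r j * \<bar>h j\<bar> + r j * \<bar>xp j\<bar>) + (\<Sum>\<^sub>\<infinity>j. - (r j * \<bar>x j\<bar>))"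
        unfolding \<phi>_def by (rule infsum_add[OF sm1 sm2])
      also have "\<dots> = (\<Sum>\<^sub>\<infinity>j. r j * \<bar>h j\<bar>) + (\<Sum>\<^sub>\<infinity>j. r j * \<bar>xp j\<bar>) - (\<Sum>\<^sub>\<infinity>j. r j * \<bar>x j\<bar>)"
        by (simp add: infsum_add[OF smhr smxp] infsum_uminus)
      finally show ?thesis
        using norm1_val[where r=r, OF r hl] norm1_val[where r=r, OF r xp] norm1_val[where r=r, OF r xl]
        unfolding h_def by simp
    qed
    have phi_le: "\<phi> j \<le> 2 * (r j * min \<bar>h j\<bar> \<bar>xp j\<bar>)" for j
    proof -
      have "\<bar>h j\<bar> + \<bar>xp j\<bar> - \<bar>x j\<bar> \<le> 2 * min \<bar>h j\<bar> \<bar>xp j\<bar>"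
        unfolding h_def by (simp add: min_def) linarith
      then have "r j * (\<bar>h j\<bar> + \<bar>xp j\<bar> - \<bar>x j\<bar>) \<le> r j * (2 * min \<bar>h j\<bar> \<bar>xp j\<bar>)"
        using r[of j] by (intro mult_left_mono) auto
      then show ?thesis unfolding \<phi>_def by (simp add: algebra_simps)
    qed
    have finb: "sum \<phi> F \<le> 2 * ((M / \<alpha>) powr (t / 2) * D + C * M powr t * \<alpha> powr (1 - t))"
      if "finite F" "\<alpha> > 0" for F \<alpha>
    proof -
      have "sum \<phi> F \<le> (\<Sum>j\<in>F. 2 * (r j * min \<bar>h j\<bar> \<bar>xp j\<bar>))" by (intro sum_mono phi_le)
      also have "\<dots> = 2 * (\<Sum>j\<in>F. r j * min \<bar>h j\<bar> \<bar>xp j\<bar>)" by (simp add: sum_distrib_left)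
      also have "\<dots> \<le> 2 * ((M / \<alpha>) powr (t / 2) * D + C * M powr t * \<alpha> powr (1 - t))"
        using fin_bound[OF a r that(2) M0 t0 t1 SM HK smh that(1)] unfolding D_def C_def by simp
      finally show ?thesis .
    qed
    have RHS0: "0 \<le> 2 * (1 + C) * M powr (t / (2 - t)) * D powr e" using C0 by simp
    have "(\<Sum>\<^sub>\<infinity>j. \<phi> j) \<le> 2 * (1 + C) * M powr (t / (2 - t)) * D powr e"
    proof (cases "D = 0")
      case True
      have "\<phi> j = 0" for j
      proof -
        have "(\<Sum>j\<in>{j}. (a j * h j)\<^sup>2) \<le> (\<Sum>\<^sub>\<infinity>j. (a j * h j)\<^sup>2)"
          by (rule finite_sum_le_infsum[OF smh]) auto
        also have "(\<Sum>\<^sub>\<infinity>j. (a j * h j)\<^sup>2) = 0" using True unfolding D_def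
          by (simp add: infsum_nonneg)
        finally have "h j = 0" using a[of j] by simp
        then show ?thesis unfolding \<phi>_def h_def by simp
      qed
      then have "(\<Sum>\<^sub>\<infinity>j. \<phi> j) = 0" by simp
      then show ?thesis using RHS0 by simp
    next
      case Dn: False
      show ?thesis
      proof (cases "M = 0")
        case True
        show ?thesis
        proof (rule infsum_le_finite_sums[OF smphi])
          fix F :: "'i set" assume "finite F"
          from finb[OF this, of 1] True have "sum \<phi> F \<le> 0" using t0 by simp
          then show "sum \<phi> F \<le> 2 * (1 + C) * M powr (t / (2 - t)) * D powr e" using RHS0 by linarith
        qed
      next
        case False
        then have Mp: "M > 0" using M0 by simp
        have Dp: "D > 0" using D0 Dn by simp
        obtain \<alpha> where al: "\<alpha> > 0" and eq: "(M / \<alpha>) powr (t / 2) * D + C * M powr t * \<alpha> powr (1 - t)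
            = (1 + C) * M powr (t / (2 - t)) * D powr e"
          using alpha_choice[OF t0 t1 Mp Dp, of C] unfolding e_def by blast
        show ?thesis
        proof (rule infsum_le_finite_sums[OF smphi])
          fix F :: "'i set" assume "finite F"
          from finb[OF this al] show "sum \<phi> F \<le> 2 * (1 + C) * M powr (t / (2 - t)) * D powr e"
            unfolding eq by (simp only: mult.assoc)
        qed
      qed
    qed
    then show "real_of_ereal (wnorm r 1 (\<lambda>j. xp j - x j)) + real_of_ereal (wnorm r 1 xp)
          - real_of_ereal (wnorm r 1 x) \<le> 2 * (1 + C) * M powr (t / (2 - t))
          * real_of_ereal (wnorm a 2 (\<lambda>j. xp j - x j)) powr e"
      unfolding LHS Dv .
  qed
qed

lemma cond_ii_mono:
  assumes "cond_ii a r t xp K" "K \<le> K'"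
  shows "cond_ii a r t xp K'"
  using assms unfolding cond_ii_def
  by (meson mult_right_mono order_trans powr_ge_zero)

lemma ii_to_iii:
  fixes a r xp :: "'i \<Rightarrow> real"
  assumes r: "\<And>j. r j > 0" and xp: "xp \<in> lspace r 1" and c: "cond_ii a r t xp K"
  shows "cond_iii a r t xp K"
  unfolding cond_iii_def
proof (intro allI impI)
  fix x :: "'i \<Rightarrow> real"
  assume le: "\<forall>j. \<bar>x j\<bar> \<le> \<bar>xp j\<bar>" and wf: "wnorm a 2 (\<lambda>j. xp j - x j) < \<infinity>"
  have smxp: "(\<lambda>j. r j * \<bar>xp j\<bar>) summable_on UNIV" using xp lspace1[where r=r, OF r] by simp
  have "(\<lambda>j. r j * \<bar>x j\<bar>) summable_on UNIV"
  proof (rule summable_on_comparison_test[OF smxp])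
    fix j
    show "r j * \<bar>x j\<bar> \<le> r j * \<bar>xp j\<bar>" using le r[of j] by (simp add: mult_left_mono)
    show "0 \<le> r j * \<bar>x j\<bar>" using r[of j] by simp
  qed
  then have xl: "x \<in> lspace r 1" using lspace1[where r=r, OF r] by simp
  have n0: "real_of_ereal (wnorm r 1 (\<lambda>j. xp j - x j)) \<ge> 0"
    unfolding wnorm1[where r=r, OF r] using r by (auto intro!: infsum_nonneg simp: less_imp_le)
  from c xl wf have "real_of_ereal (wnorm r 1 (\<lambda>j. xp j - x j)) + real_of_ereal (wnorm r 1 xp)
          - real_of_ereal (wnorm r 1 x)
        \<le> K * real_of_ereal (wnorm a 2 (\<lambda>j. xp j - x j)) powr ((2 - 2 * t) / (2 - t))"
    unfolding cond_ii_def by blast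
  with n0 show "real_of_ereal (wnorm r 1 xp) - real_of_ereal (wnorm r 1 x)
        \<le> K * real_of_ereal (wnorm a 2 (\<lambda>j. xp j - x j)) powr ((2 - 2 * t) / (2 - t))"
    by linarith
qed

theorem lemma4p2:
  fixes a r xp :: "'i::countable \<Rightarrow> real" and t :: real
  assumes "\<And>j. a j > 0" and "\<And>j. r j > 0"
    and "xp \<in> lspace r 1"
    and "0 < t" and "t < 1"
  shows "(xp \<in> kspace a r t \<longleftrightarrow> (\<exists>K>0. cond_ii a r t xp K))
       \<and> ((\<exists>K>0. cond_ii a r t xp K) \<longleftrightarrow> (\<exists>K>0. cond_iii a r t xp K))
       \<and> (xp \<in> kspace a r t \<longrightarrow>
            cond_ii a r t xp ((2 + 4 / (2 powr (1 - t) - 1))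
                              * real_of_ereal (knorm a r t xp) powr (t / (2 - t))))
       \<and> (\<forall>K>0. cond_iii a r t xp K \<longrightarrow> knorm a r t xp \<le> ereal (K powr ((2 - t) / t)))"
proof -
  note a = assms(1) and r = assms(2) and xp = assms(3) and t0 = assms(4) and t1 = assms(5)
  define K0 where "K0 = (2 + 4 / (2 powr (1 - t) - 1)) * real_of_ereal (knorm a r t xp) powr (t / (2 - t))"
  have K00: "K0 \<ge> 0" unfolding K0_def const_eq(1)[OF t0 t1]
    using const_eq(2)[OF t0 t1] by simp
  have P3: "xp \<in> kspace a r t \<longrightarrow> cond_ii a r t xp K0"
    unfolding K0_def using ii_from_i[where a=a and r=r, OF a r xp t0 t1] by blast
  have P4: "\<forall>K>0. cond_iii a r t xp K \<longrightarrow> knorm a r t xp \<le> ereal (K powr ((2 - t) / t))"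
    using iii_bound[where a=a and r=r, OF a r xp t0 t1] by blast
  have i_ii: "\<exists>K>0. cond_ii a r t xp K" if "xp \<in> kspace a r t"
    using P3 that K00 cond_ii_mono[of a r t xp K0 "K0 + 1"] by (intro exI[of _ "K0 + 1"]) auto
  have ii_iii: "\<exists>K>0. cond_iii a r t xp K" if "\<exists>K>0. cond_ii a r t xp K"
    using that ii_to_iii[where r=r, OF r xp] by blast
  have iii_i: "xp \<in> kspace a r t" if "\<exists>K>0. cond_iii a r t xp K"
  proof -
    from that obtain K where "K > 0" "cond_iii a r t xp K" by blast
    with P4 have "knorm a r t xp \<le> ereal (K powr ((2 - t) / t))" by blast
    then show ?thesis unfolding kspace_def by (auto simp: le_less_trans)
  qed
  show ?thesis using P3 P4 i_ii ii_iii iii_i unfolding K0_def by blast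
qed

end
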